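(* Let $a$ and $b$ be relatively prime integers with $1\le a<b$. Then there exist a positive integer $n$ and a permutation $\pi=(\pi_1,\ldots,\pi_n)$ of $\{1,\ldots,n\}$ such that $\{\pi_{i+1}-\pi_i : 1\le i\le n-1\}=\{a,-b\}$; that is, $(a,-b)$ is a $D$-pair.
   Context: A pair $(p,q)$ of distinct integers is called a $D$-pair if for some $n\ge 1$ there is a permutation $\pi$ of $\{1,\ldots,n\}$ whose set of discrete derivative values $\{\pi_{i+1}-\pi_i: 1\le i\le n-1\}$ equals $\{p,q\}$. *)

theory Defs
  imports Main
begin

definition derivative_set :: "nat \<Rightarrow> (nat \<Rightarrow> int) \<Rightarrow> int set" where
  "derivative_set n \<pi> = {\<pi> (i + 1) - \<pi> i | i. 1 \<le> i \<and> i + 1 \<le> n}"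

definition D_pair :: "int \<Rightarrow> int \<Rightarrow> bool" where
  "D_pair p q \<longleftrightarrow> p \<noteq> q \<and>
     (\<exists>n::nat. n \<ge> 1 \<and> (\<exists>\<pi> :: nat \<Rightarrow> int.
        bij_betw \<pi> {1..n} {1..int n} \<and> derivative_set n \<pi> = {p, q}))"

end

theory Submission
  imports Defs
begin

lemma step_mod:
  fixes r a n :: int
  assumes "0 < a" "a < n"
  shows "(r + a) mod n - r mod n = a \<or> (r + a) mod n - r mod n = a - n"
proof -
  have e: "(r + a) mod n = (r mod n + a) mod n" by (simp add: mod_add_left_eq)
  have "0 \<le> r mod n" "r mod n < n" using assms by auto
  show ?thesis
  proof (cases "r mod n + a < n")
    case True
    then show ?thesis using e \<open>0 \<le> r mod n\<close> assms by simp
  next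
    case False
    then have "(r mod n + a) mod n = r mod n + a - n"
      using \<open>r mod n < n\<close> assms
    proof -
      have "(r mod n + a) mod n = (r mod n + a - n + n) mod n" by simp
      also have "\<dots> = (r mod n + a - n) mod n" by (rule mod_add_self2)
      also have "\<dots> = r mod n + a - n"
      proof (rule mod_pos_pos_trivial)
        show "0 \<le> r mod n + a - n" using False by simp
        have rn: "r mod n < n" using assms by simp
        show "r mod n + a - n < n" using rn assms by linarith
      qed
      finally show ?thesis .
    qed
    then show ?thesis using e by simp
  qed
qed

lemma hit:
  fixes a n r :: int
  assumes "coprime a n" "1 < n" "0 < r" "r < n"
  shows "\<exists>i::nat. 1 \<le> i \<and> i + 1 \<le> nat n \<and> (int i * a) mod n = r"
proof -
  obtain u v where uv: "u * a + v * n = 1"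
    using assms(1) bezout_int[of a n] by (auto simp: coprime_iff_gcd_eq_1)
  define j where "j = (r * u) mod n"
  have j0: "0 \<le> j" "j < n" using assms by (auto simp: j_def)
  have "(j * a) mod n = (r * u * a) mod n" unfolding j_def by (simp add: mod_mult_left_eq)
  also have "r * u * a = r * (1 - v * n)"
  proof -
    have "u * a = 1 - v * n" using uv by simp
    then show ?thesis by (metis mult.assoc)
  qed
  also have "r * (1 - v * n) = r + (-(r * v)) * n" by (simp add: algebra_simps)
  also have "(r + (-(r * v)) * n) mod n = r mod n" by (rule mod_mult_self1)
  also have "\<dots> = r" using assms by simp
  finally have ja: "(j * a) mod n = r" .
  have "j \<noteq> 0" using ja assms by auto
  then show ?thesis using j0 ja
    by (intro exI[of _ "nat j"]) auto
qed

theorem theorem2p5: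
  fixes a b :: int
  assumes "coprime a b" and "1 \<le> a" and "a < b"
  shows "D_pair a (-b)"
proof -
  define n where "n = a + b"
  have cop: "coprime a n" using assms(1) unfolding n_def
    by (simp add: coprime_iff_gcd_eq_1)
  define p where "p = (\<lambda>i::nat. (int i * a) mod n + 1)"
  have n1: "1 < n" using assms n_def by simp
  have inj: "inj_on p {1..nat n}"
  proof
    fix i j assume i: "i \<in> {1..nat n}" and j: "j \<in> {1..nat n}" and e: "p i = p j"
    then have "(int i * a) mod n = (int j * a) mod n" unfolding p_def by simp
    then have "n dvd int i * a - int j * a"
      by (simp add: mod_eq_dvd_iff)
    then have "n dvd (int i - int j) * a"
      by (simp add: algebra_simps)
    then have d: "n dvd (int i - int j)"
      using cop by (metis coprime_commute coprime_dvd_mult_left_iff)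
    have "\<bar>int i - int j\<bar> < n" using i j n1 by auto
    have "int i - int j = 0"
    proof (rule ccontr)
      assume "int i - int j \<noteq> 0"
      from dvd_imp_le_int[OF this d] show False using \<open>\<bar>int i - int j\<bar> < n\<close> n1 by simp
    qed
    then show "i = j" by simp
  qed
  have img: "p ` {1..nat n} \<subseteq> {1..int (nat n)}"
  proof
    fix y assume "y \<in> p ` {1..nat n}"
    then obtain x where "y = (int x * a) mod n + 1" unfolding p_def by auto
    moreover have m1: "(int x * a) mod n < n" "0 \<le> (int x * a) mod n" using n1 by auto
    ultimately have "1 \<le> y" "y \<le> n" by linarith+
    then show "y \<in> {1..int (nat n)}" using n1 by simp
  qed
  have bij: "bij_betw p {1..nat n} {1..int (nat n)}"
    unfolding bij_betw_def
  proof
    show "inj_on p {1..nat n}" by (rule inj)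
    have "card (p ` {1..nat n}) = card {1..int (nat n)}"
      using card_image[OF inj] n1 by simp
    then show "p ` {1..nat n} = {1..int (nat n)}"
      using img by (simp add: card_subset_eq)
  qed
  have diff: "p (i + 1) - p i = (int i * a + a) mod n - (int i * a) mod n" for i
    by (simp add: p_def algebra_simps)
  have ds: "derivative_set (nat n) p = {a, -b}"
  proof
    show "derivative_set (nat n) p \<subseteq> {a, -b}"
      unfolding derivative_set_def using step_mod[of a n] assms n_def diff by fastforce
  next
    obtain i where i: "1 \<le> i" "i + 1 \<le> nat n" "(int i * a) mod n = 1"
      using hit[OF cop n1, of 1] assms n_def by auto
    have "(int i * a + a) mod n = ((int i * a) mod n + a) mod n"
      by (simp add: mod_add_left_eq)
    also have "\<dots> = 1 + a" using i assms n_def by (simp add: mod_pos_pos_trivial)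
    finally have "p (i + 1) - p i = a"
      using diff[of i] i by simp
    then have A: "a \<in> derivative_set (nat n) p"
      unfolding derivative_set_def using i by force
    obtain k where k: "1 \<le> k" "k + 1 \<le> nat n" "(int k * a) mod n = n - 1"
      using hit[OF cop n1, of "n - 1"] assms n_def by auto
    have "(int k * a + a) mod n = ((n - 1) + a) mod n"
      using k by (metis mod_add_left_eq)
    also have "\<dots> = ((a - 1) + n) mod n" by (simp add: algebra_simps)
    also have "\<dots> = (a - 1) mod n" by (rule mod_add_self2)
    also have "\<dots> = a - 1"
      using assms n_def by (simp add: mod_pos_pos_trivial)
    finally have "p (k + 1) - p k = -b"
      using diff[of k] k n_def by simp
    then have B: "-b \<in> derivative_set (nat n) p"
      unfolding derivative_set_def using k by force
    show "{a, -b} \<subseteq> derivative_set (nat n) p" using A B by simp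
  qed
  show ?thesis unfolding D_pair_def
    using assms n1 bij ds by (intro conjI exI[of _ "nat n"] exI[of _ p]) auto
qed

end
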